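(* Let $b\geq2$ and even, $k\leq n-2$ and $\mathbf s=s_1s_2\ldots s_k$. If $\mathbf t$ is the first sequence in $\mathbf s\,|\,R_n(b)$ when this set is listed in co-Reflected Gray Code Order, then $\mathbf t$ has one of the following forms: 1. $\mathbf t=\mathbf sM0\ldots0$ if $U_{k+1}$ is odd and $M$ is even, 2. $\mathbf t=\mathbf sM(M+1)0\ldots0$ if $U_{k+1}$ is odd and $M$ is odd, 3. $\mathbf t=\mathbf s0\ldots0$ if $U_{k+1}$ is even, where $M=\min\{b,\max\{s_i\}_{i=1}^k+1\}$ and $U_{k+1}=\sum_{i=1}^k[s_i\neq0 \text{ and } s_i \text{ is even}]$.
   Context: A restricted growth function of length $n$ is an integer sequence $s_1s_2\ldots s_n$ with $s_1=0$ and $0\leq s_{i+1}\leq \max\{s_j\}_{j=1}^i+1$ for $1\leq i\leq n-1$; $R_n$ is the set of these, and for $b\geq1$, $R_n(b)=\{s_1\ldots s_n\in R_n : \max\{s_i\}_{i=1}^n\leq b\}$. For a sequence $\mathbf u$, $\mathbf u\,|\,S$ denotes the subset of $S$ of sequences having prefix $\mathbf u$. The co-Reflected Gray Code Order on $\{0,1,\ldots,m-1\}^n$ ($m\geq2$) is defined by: $s_1\ldots s_n$ is less than $t_1\ldots t_n$ if, for the position $k$ with $s_i=t_i$ ($1\leq i\leq k-1$) and $s_k\neq t_k$, either $U_k$ is even and $s_k<t_k$, or $U_k$ is odd and $s_k>t_k$, where $U_k=|\{i\in\{1,\ldots,k-1\}: s_i\neq0,\ s_i \text{ even}\}|$. $[P]$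 denotes the Iverson bracket (1 if $P$ is true, 0 otherwise). *)

theory Defs
  imports Main
begin

text \<open>Sequences are 0-indexed lists: paper's s_{i+1} is s ! i.\<close>

definition RGF :: "nat \<Rightarrow> nat list set" where
  "RGF n = {s. length s = n \<and> (n \<ge> 1 \<longrightarrow> s ! 0 = 0) \<and>
     (\<forall>i. i + 1 < n \<longrightarrow> s ! (i + 1) \<le> Max (set (take (i + 1) s)) + 1)}"

definition RGFb :: "nat \<Rightarrow> nat \<Rightarrow> nat list set" where
  "RGFb n b = {s \<in> RGF n. \<forall>x \<in> set s. x \<le> b}"

definition with_prefix :: "nat list \<Rightarrow> nat list set \<Rightarrow> nat list set" where
  "with_prefix u S = {t \<in> S. take (length u) t = u}"

text \<open>U_{k+1} in the paper (number of nonzero even entries among the first k).\<close>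
definition Ucount :: "nat list \<Rightarrow> nat \<Rightarrow> nat" where
  "Ucount s k = card {i. i < k \<and> s ! i \<noteq> 0 \<and> even (s ! i)}"

definition coRGC_less :: "nat list \<Rightarrow> nat list \<Rightarrow> bool" where
  "coRGC_less s t \<longleftrightarrow> length s = length t \<and>
     (\<exists>k < length s. take k s = take k t \<and> s ! k \<noteq> t ! k \<and>
        ((even (Ucount s k) \<and> s ! k < t ! k) \<or> (odd (Ucount s k) \<and> s ! k > t ! k)))"

definition is_first :: "nat list \<Rightarrow> nat list set \<Rightarrow> bool" where
  "is_first t S \<longleftrightarrow> t \<in> S \<and> (\<forall>u \<in> S. u \<noteq> t \<longrightarrow> coRGC_less t u)"

end

theory Submission
  imports Defs
begin

lemma Ucount_take_eq:
  assumes "take j a = take j c" shows "Ucount a j = Ucount c j"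
proof -
  have "\<And>i. i < j \<Longrightarrow> a ! i = c ! i"
    using assms by (metis nth_take)
  then show ?thesis unfolding Ucount_def by (metis (no_types, lifting) Collect_cong)
qed

lemma Ucount_Suc:
  "Ucount a (Suc j) = Ucount a j + (if a ! j \<noteq> 0 \<and> even (a ! j) then 1 else 0)"
proof -
  let ?P = "\<lambda>i. a ! i \<noteq> 0 \<and> even (a ! i)"
  have e: "{i. i < Suc j \<and> ?P i} = {i. i < j \<and> ?P i} \<union> (if ?P j then {j} else {})"
    by (auto simp: less_Suc_eq)
  have f: "finite {i. i < j \<and> ?P i}" by simp
  show ?thesis unfolding Ucount_def e using f by auto
qed

lemma Ucount_zeros:
  assumes "\<And>i. p \<le> i \<Longrightarrow> i < p + m \<Longrightarrow> a ! i = 0"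
  shows "Ucount a (p + m) = Ucount a p"
  using assms
proof (induction m)
  case 0 then show ?case by simp
next
  case (Suc m)
  have "Ucount a (p + m) = Ucount a p" using Suc by simp
  moreover have "a ! (p + m) = 0" using Suc.prems by simp
  ultimately show ?case by (simp add: Ucount_Suc)
qed

lemma Ucount_append:
  assumes "length s = k" shows "Ucount (s @ w) k = Ucount s k"
  by (rule Ucount_take_eq) (simp add: assms)

lemma rgf_bound:
  assumes "t \<in> RGFb n b" "1 \<le> j" "j < n"
  shows "t ! j \<le> min b (Max (set (take j t)) + 1)"
proof -
  have l: "length t = n" using assms unfolding RGFb_def RGF_def by auto
  have "t ! j \<le> b" using assms l unfolding RGFb_def by auto
  moreover have "\<forall>i. i + 1 < n \<longrightarrow> t ! (i + 1) \<le> Max (set (take (i + 1) t)) + 1"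
    using assms unfolding RGFb_def RGF_def by auto
  then have "t ! ((j - 1) + 1) \<le> Max (set (take ((j - 1) + 1) t)) + 1"
    using assms by (metis Suc_eq_plus1 le_add_diff_inverse2)
  ultimately show ?thesis using assms by simp
qed

lemma first_eq:
  assumes first: "is_first t (with_prefix s (RGFb n b))"
    and cin: "c \<in> with_prefix s (RGFb n b)"
    and ls: "length s = k" and k1: "1 \<le> k"
    and ext: "\<And>j. k \<le> j \<Longrightarrow> j < n \<Longrightarrow>
        (even (Ucount c j) \<and> c ! j = 0) \<or>
        (odd (Ucount c j) \<and> c ! j = min b (Max (set (take j c)) + 1))"
  shows "t = c"
proof (rule ccontr)
  assume ne: "t \<noteq> c"
  have tin: "t \<in> with_prefix s (RGFb n b)" using first unfolding is_first_def by auto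
  have "coRGC_less t c" using first cin ne unfolding is_first_def by auto
  then obtain j where jl: "j < length t" and tk: "take j t = take j c" and d: "t ! j \<noteq> c ! j"
    and o: "(even (Ucount t j) \<and> t ! j < c ! j) \<or> (odd (Ucount t j) \<and> t ! j > c ! j)"
    unfolding coRGC_less_def by auto
  have lt: "length t = n" using tin unfolding with_prefix_def RGFb_def RGF_def by auto
  have pt: "take k t = s" using tin ls unfolding with_prefix_def by auto
  have pc: "take k c = s" using cin ls unfolding with_prefix_def by auto
  have jk: "k \<le> j"
  proof (rule ccontr)
    assume "\<not> k \<le> j"
    then have "t ! j = take k t ! j" "c ! j = take k c ! j" by auto
    then show False using d pt pc by simp
  qed
  have U: "Ucount t j = Ucount c j" by (rule Ucount_take_eq[OF tk])
  have bd: "t ! j \<le> min b (Max (set (take j t)) + 1)"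
    using rgf_bound[of t n b j] tin jk k1 jl lt unfolding with_prefix_def by auto
  from ext[OF jk] jl lt have "(even (Ucount c j) \<and> c ! j = 0) \<or>
        (odd (Ucount c j) \<and> c ! j = min b (Max (set (take j c)) + 1))" by simp
  then show False using o U bd tk by auto
qed

theorem proposition4:
  fixes b n k :: nat and s t :: "nat list"
  assumes "b \<ge> 2" and "even b" and "1 \<le> k" and "k + 2 \<le> n" and "length s = k"
    and "is_first t (with_prefix s (RGFb n b))"
  defines "M \<equiv> min b (Max (set s) + 1)"
  shows "(odd (Ucount s k) \<and> even M \<longrightarrow> t = s @ [M] @ replicate (n - k - 1) 0)
       \<and> (odd (Ucount s k) \<and> odd M \<longrightarrow> t = s @ [M, M + 1] @ replicate (n - k - 2) 0)
       \<and> (even (Ucount s k) \<longrightarrow> t = s @ replicate (n - k) 0)"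
proof -
  note first = assms(6)
  have tin: "t \<in> with_prefix s (RGFb n b)" using first unfolding is_first_def by auto
  have lt: "length t = n" using tin unfolding with_prefix_def RGFb_def RGF_def by auto
  have pt: "take k t = s" using tin assms(5) unfolding with_prefix_def by auto
  have sne: "s \<noteq> []" using assms(3,5) by auto
  have t0: "t ! 0 = 0" using tin assms(4) unfolding with_prefix_def RGFb_def RGF_def by auto
  have s0: "s ! 0 = 0"
  proof -
    have "s ! 0 = take k t ! 0" using pt by simp
    also have "\<dots> = t ! 0" using assms(3) by simp
    finally show ?thesis using t0 by simp
  qed
  have sb: "\<forall>x\<in>set s. x \<le> b" using tin pt unfolding with_prefix_def RGFb_def
    using in_set_takeD by fastforce
  have srgf: "\<And>i. i + 1 < k \<Longrightarrow> s ! (i + 1) \<le> Max (set (take (i + 1) s)) + 1"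
  proof -
    fix i assume i: "i + 1 < k"
    have "t ! (i + 1) \<le> Max (set (take (i + 1) t)) + 1"
      using tin i assms(4) unfolding with_prefix_def RGFb_def RGF_def by auto
    moreover have "t ! (i + 1) = s ! (i + 1)" using pt i by auto
    moreover have "take (i + 1) t = take (i + 1) s" using i
      by (simp add: pt[symmetric] min_def)
    ultimately show "s ! (i + 1) \<le> Max (set (take (i + 1) s)) + 1" by simp
  qed
  have Mb: "M \<le> b" unfolding M_def by simp
  have M1: "M \<ge> 1" unfolding M_def using assms(1) by simp
  have Mle: "M \<le> Max (set s) + 1" unfolding M_def by simp
  have mem: "s @ w \<in> with_prefix s (RGFb n b)"
    if lw: "length w = n - k" and wb: "\<forall>x\<in>set w. x \<le> b"
      and wr: "\<And>i. k \<le> i \<Longrightarrow> i < n \<Longrightarrow> (s @ w) ! i \<le> Max (set (take i (s @ w))) + 1"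
    for w
  proof -
    have len: "length (s @ w) = n" using lw assms(4,5) by simp
    have "\<forall>i. i + 1 < n \<longrightarrow> (s @ w) ! (i + 1) \<le> Max (set (take (i + 1) (s @ w))) + 1"
    proof (intro allI impI)
      fix i assume i: "i + 1 < n"
      show "(s @ w) ! (i + 1) \<le> Max (set (take (i + 1) (s @ w))) + 1"
      proof (cases "i + 1 < k")
        case True
        then show ?thesis using srgf[OF True] assms(5) by (simp add: nth_append)
      next
        case False
        then show ?thesis using wr[of "i+1"] i by simp
      qed
    qed
    moreover have "(s @ w) ! 0 = 0" using s0 sne by (simp add: nth_append)
    ultimately show ?thesis using len sb wb assms(5)
      unfolding with_prefix_def RGFb_def RGF_def by auto
  qed
  show ?thesis
  proof (intro conjI impI)
    assume h: "odd (Ucount s k) \<and> even M"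
    define c where "c = s @ [M] @ replicate (n - k - 1) 0"
    have cin: "c \<in> with_prefix s (RGFb n b)" unfolding c_def
    proof (rule mem)
      fix i assume i: "k \<le> i" "i < n"
      show "(s @ [M] @ replicate (n - k - 1) 0) ! i
            \<le> Max (set (take i (s @ [M] @ replicate (n - k - 1) 0))) + 1"
      proof (cases "i = k")
        case True
        then show ?thesis using assms(5) Mle by (simp add: nth_append)
      next
        case False
        then show ?thesis using assms(5) i by (simp add: nth_append)
      qed
    qed (use assms(4) Mb in auto)
    show "t = s @ [M] @ replicate (n - k - 1) 0"
      unfolding c_def[symmetric]
    proof (rule first_eq[OF first cin assms(5,3)])
      fix j assume j: "k \<le> j" "j < n"
      have Uk: "Ucount c k = Ucount s k" unfolding c_def using Ucount_append[OF assms(5)] by simp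
      have Uk1: "Ucount c (Suc k) = Ucount s k + 1"
        using Uk h M1 by (simp add: Ucount_Suc c_def nth_append assms(5))
      show "(even (Ucount c j) \<and> c ! j = 0) \<or>
        (odd (Ucount c j) \<and> c ! j = min b (Max (set (take j c)) + 1))"
      proof (cases "j = k")
        case True
        have "take k c = s" unfolding c_def using assms(5) by simp
        then show ?thesis using True Uk h assms(5) by (simp add: c_def nth_append M_def)
      next
        case False
        have z: "c ! i = 0" if "Suc k \<le> i" "i < Suc k + (j - Suc k)" for i
          using that j assms(5) by (simp add: c_def nth_append)
        have "Ucount c j = Ucount c (Suc k)"
          using Ucount_zeros[of "Suc k" "j - Suc k" c, OF z] False j by simp
        then show ?thesis using Uk1 h False j assms(5) by (simp add: c_def nth_append)
      qed
    qed
  next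
    assume h: "odd (Ucount s k) \<and> odd M"
    have MS: "M = Max (set s) + 1" proof (cases "b \<le> Max (set s) + 1")
      case True
      then have "M = b" unfolding M_def by simp
      then show ?thesis using h assms(2) by simp
    qed (simp add: M_def)
    have "M \<noteq> b" using h assms(2) by auto
    then have Mlb: "M + 1 \<le> b" using Mb by simp
    have Mx: "Max (set (s @ [M])) = M" using MS sne by (simp add: max_def)
    define c where "c = s @ [M, M + 1] @ replicate (n - k - 2) 0"
    have cin: "c \<in> with_prefix s (RGFb n b)" unfolding c_def
    proof (rule mem)
      fix i assume i: "k \<le> i" "i < n"
      show "(s @ [M, M + 1] @ replicate (n - k - 2) 0) ! i
            \<le> Max (set (take i (s @ [M, M + 1] @ replicate (n - k - 2) 0))) + 1"
      proof (cases "i = k")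
        case True
        then show ?thesis using assms(5) Mle by (simp add: nth_append)
      next
        case False
        show ?thesis
        proof (cases "i = Suc k")
          case True
          have "take i (s @ [M, M + 1] @ replicate (n - k - 2) 0) = s @ [M]"
            using True assms(5) by simp
          then show ?thesis using True assms(5) Mx by (simp add: nth_append)
        next
          case False2: False
          then show ?thesis using False assms(5) i by (simp add: nth_append)
        qed
      qed
    qed (use assms(4) Mb Mlb in auto)
    show "t = s @ [M, M + 1] @ replicate (n - k - 2) 0"
      unfolding c_def[symmetric]
    proof (rule first_eq[OF first cin assms(5,3)])
      fix j assume j: "k \<le> j" "j < n"
      have Uk: "Ucount c k = Ucount s k" unfolding c_def using Ucount_append[OF assms(5)] by simp
      have Uk1: "Ucount c (Suc k) = Ucount s k"
        using Uk h by (simp add: Ucount_Suc c_def nth_append assms(5))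
      have Uk2: "Ucount c (Suc (Suc k)) = Ucount s k + 1"
        using Uk1 h by (simp add: Ucount_Suc c_def nth_append assms(5))
      show "(even (Ucount c j) \<and> c ! j = 0) \<or>
        (odd (Ucount c j) \<and> c ! j = min b (Max (set (take j c)) + 1))"
      proof (cases "j = k")
        case True
        have "take k c = s" unfolding c_def using assms(5) by simp
        then show ?thesis using True Uk h assms(5) by (simp add: c_def nth_append M_def)
      next
        case False
        show ?thesis
        proof (cases "j = Suc k")
          case True
          have "take j c = s @ [M]" unfolding c_def using True assms(5) by simp
          then show ?thesis using True Uk1 h assms(5) Mx Mlb by (simp add: c_def nth_append)
        next
          case False2: False
          have z: "c ! i = 0" if "Suc (Suc k) \<le> i" "i < Suc (Suc k) + (j - Suc (Suc k))" for i
            using that j assms(5) by (simp add: c_def nth_append)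
          have jj: "Suc (Suc k) + (j - Suc (Suc k)) = j" using False False2 j by simp
          have "Ucount c j = Ucount c (Suc (Suc k))"
            using Ucount_zeros[of "Suc (Suc k)" "j - Suc (Suc k)" c, OF z] unfolding jj by simp
          then show ?thesis using Uk2 h False False2 j assms(5) by (simp add: c_def nth_append)
        qed
      qed
    qed
  next
    assume h: "even (Ucount s k)"
    define c where "c = s @ replicate (n - k) 0"
    have cin: "c \<in> with_prefix s (RGFb n b)" unfolding c_def
      by (rule mem) (use assms(4,5) in \<open>auto simp: nth_append\<close>)
    show "t = s @ replicate (n - k) 0"
      unfolding c_def[symmetric]
    proof (rule first_eq[OF first cin assms(5,3)])
      fix j assume j: "k \<le> j" "j < n"
      have Uk: "Ucount c k = Ucount s k" unfolding c_def using Ucount_append[OF assms(5)] by simp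
      have z: "c ! i = 0" if "k \<le> i" "i < k + (j - k)" for i
        using that j assms(5) by (simp add: c_def nth_append)
      have "Ucount c j = Ucount c k"
        using Ucount_zeros[of k "j - k" c, OF z] j by simp
      then show "(even (Ucount c j) \<and> c ! j = 0) \<or>
        (odd (Ucount c j) \<and> c ! j = min b (Max (set (take j c)) + 1))"
        using Uk h j assms(5) by (simp add: c_def nth_append)
    qed
  qed
qed

end
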